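(* Let $F_1,\dots,F_n:\mathbb{R}^d\to\mathbb{R}^d$ with each $F_i$ $L_i$-Lipschitz, $F=\frac1n\sum_iF_i$, $L_{max}=\max_iL_i$. If the extrapolation step size of SEG-RR satisfies $\gamma_2\le\frac1{L_{max}}$, then for every epoch $k$, $$\mathbb{E}_k\Big[\sum_{i=0}^{n-1}\|F_{\pi_i^k}(\bar z_i^k)-F_{\pi_i^k}(\hat z_0^k)\|^2\Big]\le6L_{max}^2\,\mathbb{E}_k\Big[\sum_{i=0}^{n-1}\|z_i^k-z_0^k\|^2\Big]+3L_{max}^2\gamma_2^2\,\mathbb{E}_k\Big[\sum_{i=0}^{n-1}\|F_{\pi_i^k}(z_0^k)-F(z_0^k)\|^2\Big],$$ where $\hat z_0^k=z_0^k-\gamma_2F(z_0^k)$.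
   Context: SEG-RR with step sizes $\gamma_1,\gamma_2>0$: for each epoch $k$, with current point $z_0^k$, draw a permutation $\pi^k=(\pi^k_0,\dots,\pi^k_{n-1})$ of $\{1,\dots,n\}$ uniformly at random, independently of the past; for $i=0,\dots,n-1$ set $\bar z_i^k=z_i^k-\gamma_2F_{\pi_i^k}(z_i^k)$, $z_{i+1}^k=z_i^k-\gamma_1F_{\pi_i^k}(\bar z_i^k)$; then $z_0^{k+1}=z_n^k$. $\mathbb{E}_k$ denotes expectation over $\pi^k$ conditional on the history up to $z_0^k$. *)

theory Defs
  imports "HOL-Analysis.Analysis" "HOL-Probability.Probability"
    "HOL-Combinatorics.Multiset_Permutations"
begin

text \<open>The permutation p of {1..n} is represented as a distinct
  list with set {1..n}; p ! i (= pi_i) is the i-th drawn index (i = 0..n-1).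
  seg_z g1 g2 F p z0 i is the iterate z_i of the epoch started at z0.\<close>

fun seg_z :: "real \<Rightarrow> real \<Rightarrow> (nat \<Rightarrow> 'a::real_normed_vector \<Rightarrow> 'a) \<Rightarrow> nat list \<Rightarrow> 'a \<Rightarrow> nat \<Rightarrow> 'a"
  where
  "seg_z g1 g2 F p z0 0 = z0"
| "seg_z g1 g2 F p z0 (Suc i) =
     seg_z g1 g2 F p z0 i
       - g1 *\<^sub>R F (p ! i) (seg_z g1 g2 F p z0 i - g2 *\<^sub>R F (p ! i) (seg_z g1 g2 F p z0 i))"

definition seg_zbar :: "real \<Rightarrow> real \<Rightarrow> (nat \<Rightarrow> 'a::real_normed_vector \<Rightarrow> 'a) \<Rightarrow> nat list \<Rightarrow> 'a \<Rightarrow> nat \<Rightarrow> 'a"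
  where "seg_zbar g1 g2 F p z0 i =
     seg_z g1 g2 F p z0 i - g2 *\<^sub>R F (p ! i) (seg_z g1 g2 F p z0 i)"

text \<open>Expectation over a uniformly random permutation of {1..n} (conditional on z0).\<close>
definition Eperm :: "nat \<Rightarrow> (nat list \<Rightarrow> real) \<Rightarrow> real" where
  "Eperm n X = measure_pmf.expectation (pmf_of_set (permutations_of_set {1..n})) X"

end

theory Submission
  imports Defs
begin

lemma pw_bound:
  fixes Fj :: "'a::real_normed_vector \<Rightarrow> 'a"
  assumes lip: "Lj-lipschitz_on UNIV Fj" and LM: "Lj \<le> M" and g2: "g2 > 0" and gM: "g2 * M \<le> 1"
  shows "(norm (Fj (zi - g2 *\<^sub>R Fj zi) - Fj (z0 - g2 *\<^sub>R Fb)))\<^sup>2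
     \<le> 6 * M\<^sup>2 * (norm (zi - z0))\<^sup>2 + 3 * M\<^sup>2 * g2\<^sup>2 * (norm (Fj z0 - Fb))\<^sup>2"
proof -
  have L0: "0 \<le> Lj" using lipschitz_on_nonneg[OF lip] .
  define x where "x = norm (zi - z0)"
  define y where "y = norm (Fj z0 - Fb)"
  have x0: "x \<ge> 0" "y \<ge> 0" unfolding x_def y_def by auto
  have d: "(zi - g2 *\<^sub>R Fj zi) - (z0 - g2 *\<^sub>R Fb) = (zi - z0) - g2 *\<^sub>R (Fj zi - Fj z0) - g2 *\<^sub>R (Fj z0 - Fb)"
    by (simp add: algebra_simps)
  have l1: "norm (Fj zi - Fj z0) \<le> Lj * x"
    unfolding x_def using lipschitz_on_normD[OF lip] by auto
  have "norm ((zi - g2 *\<^sub>R Fj zi) - (z0 - g2 *\<^sub>R Fb)) \<le> x + g2 * norm (Fj zi - Fj z0) + g2 * y"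
    unfolding d x_def y_def using g2
    by (smt (verit) norm_scaleR norm_triangle_ineq4 abs_of_pos)
  also have "\<dots> \<le> x + g2 * (Lj * x) + g2 * y"
    using l1 g2 by (simp add: mult_left_mono)
  also have "\<dots> \<le> 2 * x + g2 * y"
  proof -
    have "g2 * Lj \<le> 1" using gM LM g2 by (smt (verit) mult_left_mono)
    hence "g2 * (Lj * x) \<le> x" using x0 by (metis mult.assoc mult_right_mono mult_1)
    thus ?thesis by simp
  qed
  finally have n1: "norm ((zi - g2 *\<^sub>R Fj zi) - (z0 - g2 *\<^sub>R Fb)) \<le> 2 * x + g2 * y" .
  have "norm (Fj (zi - g2 *\<^sub>R Fj zi) - Fj (z0 - g2 *\<^sub>R Fb)) \<le> Lj * norm ((zi - g2 *\<^sub>R Fj zi) - (z0 - g2 *\<^sub>R Fb))"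
    using lipschitz_on_normD[OF lip] by auto
  also have "\<dots> \<le> M * (2 * x + g2 * y)"
    using n1 L0 LM x0 g2 by (meson mult_mono order_trans norm_ge_zero)
  finally have n2: "norm (Fj (zi - g2 *\<^sub>R Fj zi) - Fj (z0 - g2 *\<^sub>R Fb)) \<le> M * (2 * x + g2 * y)" .
  have "(norm (Fj (zi - g2 *\<^sub>R Fj zi) - Fj (z0 - g2 *\<^sub>R Fb)))\<^sup>2 \<le> (M * (2 * x + g2 * y))\<^sup>2"
    using n2 by (simp add: power_mono)
  also have "\<dots> = M\<^sup>2 * (2 * x + g2 * y)\<^sup>2" by (simp add: power_mult_distrib)
  also have "\<dots> \<le> M\<^sup>2 * (6 * x\<^sup>2 + 3 * g2\<^sup>2 * y\<^sup>2)"
  proof (rule mult_left_mono)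
    have "0 \<le> (x - g2 * y)\<^sup>2" by simp
    thus "(2 * x + g2 * y)\<^sup>2 \<le> 6 * x\<^sup>2 + 3 * g2\<^sup>2 * y\<^sup>2"
      by (simp add: power2_eq_square algebra_simps)
  qed simp
  finally show ?thesis unfolding x_def y_def by (simp add: algebra_simps)
qed

theorem lemma3:
  fixes F :: "nat \<Rightarrow> real ^ 'd \<Rightarrow> real ^ 'd"
    and L :: "nat \<Rightarrow> real"
    and n :: nat and g1 g2 :: real and z0 :: "real ^ 'd"
  assumes n_pos: "n \<ge> 1"
    and lip: "\<And>i. i \<in> {1..n} \<Longrightarrow> (L i)-lipschitz_on UNIV (F i)"
    and g1_pos: "g1 > 0" and g2_pos: "g2 > 0"
    and g2_le: "g2 * Max (L ` {1..n}) \<le> 1"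
  shows
   "(let Fbar = (\<lambda>z. (1 / real n) *\<^sub>R (\<Sum>i\<in>{1..n}. F i z));
         Lmax = Max (L ` {1..n});
         zhat = z0 - g2 *\<^sub>R Fbar z0
     in Eperm n (\<lambda>p. \<Sum>i<n. (norm (F (p ! i) (seg_zbar g1 g2 F p z0 i) - F (p ! i) zhat))\<^sup>2)
        \<le> 6 * Lmax\<^sup>2 * Eperm n (\<lambda>p. \<Sum>i<n. (norm (seg_z g1 g2 F p z0 i - z0))\<^sup>2)
          + 3 * Lmax\<^sup>2 * g2\<^sup>2 * Eperm n (\<lambda>p. \<Sum>i<n. (norm (F (p ! i) z0 - Fbar z0))\<^sup>2))"
proof -
  define Fb where "Fb = (1 / real n) *\<^sub>R (\<Sum>i\<in>{1..n}. F i z0)"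
  define M where "M = Max (L ` {1..n})"
  define P where "P = permutations_of_set {1..n}"
  have Pfin: "finite P" and Pne: "P \<noteq> {}" unfolding P_def by auto
  have E: "Eperm n X = sum X P / card P" for X
    unfolding Eperm_def P_def[symmetric] using integral_pmf_of_set[OF Pne Pfin] by simp
  have pw: "(\<Sum>i<n. (norm (F (p ! i) (seg_zbar g1 g2 F p z0 i) - F (p ! i) (z0 - g2 *\<^sub>R Fb)))\<^sup>2)
     \<le> 6 * M\<^sup>2 * (\<Sum>i<n. (norm (seg_z g1 g2 F p z0 i - z0))\<^sup>2)
       + 3 * M\<^sup>2 * g2\<^sup>2 * (\<Sum>i<n. (norm (F (p ! i) z0 - Fb))\<^sup>2)" if pP: "p \<in> P" for p
  proof -
    have sp: "set p = {1..n}" "distinct p" using pP permutations_of_setD unfolding P_def by auto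
    hence lp: "length p = n" using distinct_card by fastforce
    have "(\<Sum>i<n. (norm (F (p ! i) (seg_zbar g1 g2 F p z0 i) - F (p ! i) (z0 - g2 *\<^sub>R Fb)))\<^sup>2)
      \<le> (\<Sum>i<n. 6 * M\<^sup>2 * (norm (seg_z g1 g2 F p z0 i - z0))\<^sup>2 + 3 * M\<^sup>2 * g2\<^sup>2 * (norm (F (p ! i) z0 - Fb))\<^sup>2)"
    proof (rule sum_mono)
      fix i assume "i \<in> {..<n}"
      hence j: "p ! i \<in> {1..n}" using sp lp nth_mem by (metis lessThan_iff)
      have LM: "L (p ! i) \<le> M" unfolding M_def using j by simp
      show "(norm (F (p ! i) (seg_zbar g1 g2 F p z0 i) - F (p ! i) (z0 - g2 *\<^sub>R Fb)))\<^sup>2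
        \<le> 6 * M\<^sup>2 * (norm (seg_z g1 g2 F p z0 i - z0))\<^sup>2 + 3 * M\<^sup>2 * g2\<^sup>2 * (norm (F (p ! i) z0 - Fb))\<^sup>2"
        unfolding seg_zbar_def
        using pw_bound[OF lip[OF j] LM g2_pos g2_le[folded M_def]] by blast
    qed
    also have "\<dots> = 6 * M\<^sup>2 * (\<Sum>i<n. (norm (seg_z g1 g2 F p z0 i - z0))\<^sup>2)
       + 3 * M\<^sup>2 * g2\<^sup>2 * (\<Sum>i<n. (norm (F (p ! i) z0 - Fb))\<^sup>2)"
      by (simp add: sum.distrib sum_distrib_left)
    finally show ?thesis .
  qed
  have "sum (\<lambda>p. \<Sum>i<n. (norm (F (p ! i) (seg_zbar g1 g2 F p z0 i) - F (p ! i) (z0 - g2 *\<^sub>R Fb)))\<^sup>2) P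
     \<le> sum (\<lambda>p. 6 * M\<^sup>2 * (\<Sum>i<n. (norm (seg_z g1 g2 F p z0 i - z0))\<^sup>2)
       + 3 * M\<^sup>2 * g2\<^sup>2 * (\<Sum>i<n. (norm (F (p ! i) z0 - Fb))\<^sup>2)) P"
    by (rule sum_mono) (rule pw)
  also have "\<dots> = 6 * M\<^sup>2 * sum (\<lambda>p. \<Sum>i<n. (norm (seg_z g1 g2 F p z0 i - z0))\<^sup>2) P
       + 3 * M\<^sup>2 * g2\<^sup>2 * sum (\<lambda>p. \<Sum>i<n. (norm (F (p ! i) z0 - Fb))\<^sup>2) P"
    by (simp add: sum.distrib sum_distrib_left)
  finally have main: "sum (\<lambda>p. \<Sum>i<n. (norm (F (p ! i) (seg_zbar g1 g2 F p z0 i) - F (p ! i) (z0 - g2 *\<^sub>R Fb)))\<^sup>2) P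
     \<le> 6 * M\<^sup>2 * sum (\<lambda>p. \<Sum>i<n. (norm (seg_z g1 g2 F p z0 i - z0))\<^sup>2) P
       + 3 * M\<^sup>2 * g2\<^sup>2 * sum (\<lambda>p. \<Sum>i<n. (norm (F (p ! i) z0 - Fb))\<^sup>2) P" .
  have cp: "real (card P) > 0" using Pfin Pne by (simp add: card_gt_0_iff)
  have "sum (\<lambda>p. \<Sum>i<n. (norm (F (p ! i) (seg_zbar g1 g2 F p z0 i) - F (p ! i) (z0 - g2 *\<^sub>R Fb)))\<^sup>2) P / card P
     \<le> 6 * M\<^sup>2 * (sum (\<lambda>p. \<Sum>i<n. (norm (seg_z g1 g2 F p z0 i - z0))\<^sup>2) P / card P)
       + 3 * M\<^sup>2 * g2\<^sup>2 * (sum (\<lambda>p. \<Sum>i<n. (norm (F (p ! i) z0 - Fb))\<^sup>2) P / card P)"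
    using divide_right_mono[OF main, of "real (card P)"] cp by (simp add: add_divide_distrib)
  thus ?thesis unfolding Let_def E Fb_def[symmetric] M_def[symmetric] .
qed

end
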